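(* Let $X$ be a metrizable space, $G$ a group and $\varphi\colon G\times X\to X$ an action which is metric-independent expansive (MIE). If $Y\subseteq X$ is a closed subset which is invariant ($g\cdot y\in Y$ for all $g\in G$, $y\in Y$), then the restricted action of $G$ on $Y$ (with the subspace topology) is MIE.
   Context: We write $g\cdot x=\varphi(g,x)$. If $d$ is a metric on $X$, the action is expansive with respect to $d$ if there is $c>0$ such that for all $x\neq y$ in $X$ there is $g\in G$ with $d(g\cdot x,g\cdot y)>c$. The action is metric-independent expansive (MIE) if it is expansive with respect to every metric compatible with the topology of $X$. *)

theory Defs
  imports "HOL-Analysis.Analysis" "HOL-Algebra.Group_Action"
begin

definition compatible_metric :: "'a topology \<Rightarrow> ('a \<Rightarrow> 'a \<Rightarrow> real) \<Rightarrow> bool" where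
  "compatible_metric X d \<longleftrightarrow>
     Metric_space (topspace X) d \<and> Metric_space.mtopology (topspace X) d = X"

definition expansive_wrt ::
  "('g, 'm) monoid_scheme \<Rightarrow> ('g \<Rightarrow> 'a \<Rightarrow> 'a) \<Rightarrow> 'a set \<Rightarrow> ('a \<Rightarrow> 'a \<Rightarrow> real) \<Rightarrow> bool" where
  "expansive_wrt G \<phi> S d \<longleftrightarrow>
     (\<exists>c>0. \<forall>x\<in>S. \<forall>y\<in>S. x \<noteq> y \<longrightarrow> (\<exists>g\<in>carrier G. d (\<phi> g x) (\<phi> g y) > c))"

definition MIE :: "('g, 'm) monoid_scheme \<Rightarrow> ('g \<Rightarrow> 'a \<Rightarrow> 'a) \<Rightarrow> 'a topology \<Rightarrow> bool" where
  "MIE G \<phi> X \<longleftrightarrow> (\<forall>d. compatible_metric X d \<longrightarrow> expansive_wrt G \<phi> (topspace X) d)"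

end

theory Submission imports Defs begin

lemma restr_action:
  assumes "group_action G E \<phi>" "Y \<subseteq> E" "\<forall>g\<in>carrier G. \<forall>y\<in>Y. \<phi> g y \<in> Y"
  shows "group_action G Y (\<lambda>g. restrict (\<phi> g) Y)"
proof -
  interpret group_action G E \<phi> by fact
  have grp: "group G" using group_hom group_hom.axioms(1) by blast
  have bij: "restrict (\<phi> g) Y \<in> Bij Y" if g: "g \<in> carrier G" for g
  proof -
    have "inj_on (\<phi> g) Y" using inj_prop[OF g] assms(2) inj_on_subset by blast
    moreover have "\<phi> g ` Y = Y"
    proof
      show "\<phi> g ` Y \<subseteq> Y" using assms(3) g by auto
      show "Y \<subseteq> \<phi> g ` Y"
      proof
        fix y assume y: "y \<in> Y"
        have ig: "inv\<^bsub>G\<^esub> g \<in> carrier G" using g grp by (simp add: group.inv_closed)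
        have "\<phi> g (\<phi> (inv\<^bsub>G\<^esub> g) y) = \<phi> (g \<otimes>\<^bsub>G\<^esub> inv\<^bsub>G\<^esub> g) y"
          using composition_rule[of y g "inv\<^bsub>G\<^esub> g"] y assms(2) g ig by auto
        also have "\<dots> = y" using g grp y assms(2)
          by (metis group.r_inv id_eq_one restrict_apply' subsetD)
        finally show "y \<in> \<phi> g ` Y" using assms(3) ig y by (metis imageI)
      qed
    qed
    ultimately show ?thesis unfolding Bij_def by (auto simp: bij_betw_def)
  qed
  show ?thesis
    unfolding group_action_def group_hom_def group_hom_axioms_def
  proof (intro conjI)
    show "group G" by fact
    show "group (BijGroup Y)" by (rule group_BijGroup)
    show "(\<lambda>g. restrict (\<phi> g) Y) \<in> hom G (BijGroup Y)"
    proof (rule homI)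
      fix g assume "g \<in> carrier G" then show "restrict (\<phi> g) Y \<in> carrier (BijGroup Y)"
        using bij by (simp add: BijGroup_def)
    next
      fix g h assume g: "g \<in> carrier G" and h: "h \<in> carrier G"
      have "restrict (\<phi> (g \<otimes>\<^bsub>G\<^esub> h)) Y = compose Y (restrict (\<phi> g) Y) (restrict (\<phi> h) Y)"
        unfolding compose_def
        using composition_rule g h assms by (auto simp: subset_iff)
      then show "restrict (\<phi> (g \<otimes>\<^bsub>G\<^esub> h)) Y = restrict (\<phi> g) Y \<otimes>\<^bsub>BijGroup Y\<^esub> restrict (\<phi> h) Y"
        using bij g h by (simp add: BijGroup_def)
    qed
  qed
qed

definition finer :: "'a set \<Rightarrow> ('a \<Rightarrow> 'a \<Rightarrow> real) \<Rightarrow> ('a \<Rightarrow> 'a \<Rightarrow> real) \<Rightarrow> bool" where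
  "finer M d1 d2 \<longleftrightarrow> (\<forall>a\<in>M. \<forall>r>0. \<exists>s>0. \<forall>x\<in>M. d1 a x < s \<longrightarrow> d2 a x < r)"

lemma mtop_eq_iff:
  assumes m1: "Metric_space M d1" and m2: "Metric_space M d2"
  shows "Metric_space.mtopology M d1 = Metric_space.mtopology M d2 \<longleftrightarrow> finer M d1 d2 \<and> finer M d2 d1"
proof
  assume eq: "Metric_space.mtopology M d1 = Metric_space.mtopology M d2"
  have gen: "finer M e1 e2" if n1: "Metric_space M e1" and n2: "Metric_space M e2"
    and eq: "Metric_space.mtopology M e1 = Metric_space.mtopology M e2" for e1 e2
    unfolding finer_def
  proof (intro ballI allI impI)
    fix a r assume a: "a \<in> M" and r: "(r::real) > 0"
    have "openin (Metric_space.mtopology M e2) (Metric_space.mball M e2 a r)"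
      by (simp add: Metric_space.openin_mball n2)
    then have "openin (Metric_space.mtopology M e1) (Metric_space.mball M e2 a r)" using eq by simp
    moreover have "a \<in> Metric_space.mball M e2 a r" using a r n2 by (simp add: Metric_space.centre_in_mball_iff)
    ultimately obtain s where s: "s > 0" "Metric_space.mball M e1 a s \<subseteq> Metric_space.mball M e2 a r"
      using Metric_space.openin_mtopology[OF n1] by blast
    show "\<exists>s>0. \<forall>x\<in>M. e1 a x < s \<longrightarrow> e2 a x < r"
      using s a by (auto simp: Metric_space.in_mball[OF n1] Metric_space.in_mball[OF n2] subset_iff)
  qed
  show "finer M d1 d2 \<and> finer M d2 d1" using gen[OF m1 m2 eq] gen[OF m2 m1 eq[symmetric]] by blast
next
  assume f: "finer M d1 d2 \<and> finer M d2 d1"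
  have gen: "openin (Metric_space.mtopology M e2) U" if n1: "Metric_space M e1" and n2: "Metric_space M e2"
    and f: "finer M e2 e1" and U: "openin (Metric_space.mtopology M e1) U" for e1 e2 U
  proof -
    have "U \<subseteq> M \<and> (\<forall>x. x \<in> U \<longrightarrow> (\<exists>r>0. Metric_space.mball M e2 x r \<subseteq> U))"
    proof (intro conjI allI impI)
      show "U \<subseteq> M" using U Metric_space.openin_mtopology[OF n1] by blast
      fix x assume x: "x \<in> U"
      then obtain r where r: "r > 0" "Metric_space.mball M e1 x r \<subseteq> U"
        using U Metric_space.openin_mtopology[OF n1] by blast
      have xM: "x \<in> M" using \<open>U \<subseteq> M\<close> x by blast
      obtain s where s: "s > 0" "\<forall>y\<in>M. e2 x y < s \<longrightarrow> e1 x y < r" using f xM r unfolding finer_def by blast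
      show "\<exists>r>0. Metric_space.mball M e2 x r \<subseteq> U"
        using s r xM by (auto simp: Metric_space.in_mball[OF n1] Metric_space.in_mball[OF n2] subset_iff)
    qed
    then show ?thesis using Metric_space.openin_mtopology[OF n2] by blast
  qed
  show "Metric_space.mtopology M d1 = Metric_space.mtopology M d2"
    unfolding topology_eq using gen[OF m1 m2] gen[OF m2 m1] f by blast
qed

locale extsetup =
  fixes M Y :: "'a set" and d e :: "'a \<Rightarrow> 'a \<Rightarrow> real"
  assumes md: "Metric_space M d" and me: "Metric_space Y e" and YM: "Y \<subseteq> M" and Yne: "Y \<noteq> {}"
    and d1: "\<And>x y. d x y \<le> 1" and e1: "\<And>x y. e x y \<le> 1"
    and sep: "\<And>x. x \<in> M \<Longrightarrow> x \<notin> Y \<Longrightarrow> \<exists>s>0. \<forall>b\<in>Y. s \<le> d x b"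
    and fde: "finer Y d e" and fed: "finer Y e d"
begin

lemma dnn[simp]: "0 \<le> d x y" using Metric_space.nonneg[OF md] .
lemma enn[simp]: "0 \<le> e x y" using Metric_space.nonneg[OF me] .
lemma dcom: "d x y = d y x" using Metric_space.commute[OF md] .
lemma ecom: "e x y = e y x" using Metric_space.commute[OF me] .
lemma dtri: "x \<in> M \<Longrightarrow> y \<in> M \<Longrightarrow> z \<in> M \<Longrightarrow> d x z \<le> d x y + d y z"
  using Metric_space.triangle[OF md] .
lemma etri: "x \<in> Y \<Longrightarrow> y \<in> Y \<Longrightarrow> z \<in> Y \<Longrightarrow> e x z \<le> e x y + e y z"
  using Metric_space.triangle[OF me] .
lemma dzero: "x \<in> M \<Longrightarrow> y \<in> M \<Longrightarrow> d x y = 0 \<longleftrightarrow> x = y" using Metric_space.zero[OF md] .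
lemma ezero: "x \<in> Y \<Longrightarrow> y \<in> Y \<Longrightarrow> e x y = 0 \<longleftrightarrow> x = y" using Metric_space.zero[OF me] .

definition dY :: "'a \<Rightarrow> real" where "dY x = Inf ((\<lambda>b. d x b) ` Y)"

lemma bddd: "bdd_below ((\<lambda>b. d x b) ` Y)"
  by (rule bdd_belowI[of _ 0]) auto

lemma dY_le: "b \<in> Y \<Longrightarrow> dY x \<le> d x b"
  unfolding dY_def by (rule cInf_lower) (auto simp: bddd)

lemma dY_nn[simp]: "0 \<le> dY x"
  unfolding dY_def using Yne by (auto intro!: cInf_greatest)

lemma dY_approx: assumes "\<epsilon> > 0" shows "\<exists>b\<in>Y. d x b < dY x + \<epsilon>"
proof (rule ccontr)
  assume "\<not> ?thesis"
  then have "\<forall>b\<in>Y. dY x + \<epsilon> \<le> d x b" by (auto simp: not_less)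
  then have "dY x + \<epsilon> \<le> Inf ((\<lambda>b. d x b) ` Y)" using Yne by (auto intro!: cInf_greatest)
  then have "dY x + \<epsilon> \<le> dY x" by (simp add: dY_def)
  then show False using assms by simp
qed

lemma dY_Y: "x \<in> Y \<Longrightarrow> dY x = 0"
proof -
  assume x: "x \<in> Y"
  then have "d x x = 0" using YM dzero[of x x] by auto
  then show "dY x = 0" using dY_le[OF x, of x] dY_nn[of x] by linarith
qed

lemma dY_pos: assumes "x \<in> M" "x \<notin> Y" shows "0 < dY x"
proof -
  obtain s where s: "s > 0" "\<forall>b\<in>Y. s \<le> d x b" using sep assms by blast
  have "s \<le> dY x" unfolding dY_def using Yne s by (auto intro!: cInf_greatest)
  then show ?thesis using s by simp
qed

lemma dY_lip: assumes "x \<in> M" "y \<in> M" shows "dY x \<le> dY y + d x y"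
proof -
  have "dY x - d x y \<le> dY y" unfolding dY_def[of y] using Yne
  proof (intro cInf_greatest)
    fix z assume "z \<in> (\<lambda>b. d y b) ` Y"
    then obtain b where b: "b \<in> Y" "z = d y b" by auto
    have "dY x \<le> d x b" using dY_le b by simp
    also have "\<dots> \<le> d x y + d y b" using dtri assms b YM by auto
    finally show "dY x - d x y \<le> z" using b by simp
  qed auto
  then show ?thesis by simp
qed

lemma dY_le1: "dY x \<le> 1"
proof -
  obtain b where "b \<in> Y" using Yne by auto
  then show ?thesis using dY_le[of b x] d1[of x b] by simp
qed

definition Ef :: "'a \<Rightarrow> 'a \<Rightarrow> real" where
  "Ef c x = (if x \<in> Y then e x c else Inf ((\<lambda>b. e b c + d x b / dY x) ` Y) - 1)"

lemma ratio_ge1: assumes "x \<in> M" "x \<notin> Y" "b \<in> Y" shows "1 \<le> d x b / dY x"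
  using dY_pos[OF assms(1,2)] dY_le[OF assms(3), of x] by simp

lemma bddT: assumes "x \<in> M" "x \<notin> Y" shows "bdd_below ((\<lambda>b. e b c + d x b / dY x) ` Y)"
  by (rule bdd_belowI[of _ 0]) (use ratio_ge1[OF assms] in \<open>auto intro: add_nonneg_nonneg\<close>)

lemma Ef_le: assumes "x \<in> M" "x \<notin> Y" "b \<in> Y" shows "Ef c x \<le> e b c + d x b / dY x - 1"
proof -
  have "Inf ((\<lambda>b. e b c + d x b / dY x) ` Y) \<le> e b c + d x b / dY x"
    by (rule cInf_lower) (use assms bddT in auto)
  then show ?thesis unfolding Ef_def using assms by simp
qed

lemma Ef_ge: assumes "x \<in> M" "x \<notin> Y" "\<And>b. b \<in> Y \<Longrightarrow> L \<le> e b c + d x b / dY x - 1"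
  shows "L \<le> Ef c x"
proof -
  have "L + 1 \<le> Inf ((\<lambda>b. e b c + d x b / dY x) ` Y)"
    using Yne by (intro cInf_greatest) (use assms in force)+
  then show ?thesis unfolding Ef_def using assms by simp
qed

lemma Ef_nn: assumes "x \<in> M" shows "0 \<le> Ef c x"
proof (cases "x \<in> Y")
  case True then show ?thesis by (simp add: Ef_def)
next
  case False
  show ?thesis
  proof (rule Ef_ge[OF assms False])
    fix b assume "b \<in> Y"
    then have "1 \<le> d x b / dY x" using ratio_ge1[OF assms False] by blast
    then show "0 \<le> e b c + d x b / dY x - 1" using enn[of b c] by linarith
  qed
qed

lemma Ef_le2: assumes "x \<in> M" shows "Ef c x \<le> 2"
proof (cases "x \<in> Y")
  case True then show ?thesis using e1[of x c] by (simp add: Ef_def)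
next
  case False
  have p: "dY x > 0" using dY_pos assms False by auto
  obtain b where b: "b \<in> Y" "d x b < dY x + dY x" using dY_approx[OF p, of x] by auto
  have "d x b / dY x < 2" using b p by (simp add: divide_less_eq)
  then show ?thesis using Ef_le[OF assms False b(1), of c] e1[of b c] by linarith
qed

lemma Ef_Y: "x \<in> Y \<Longrightarrow> Ef c x = e x c" by (simp add: Ef_def)

definition Sf :: "'a \<Rightarrow> 'a \<Rightarrow> real" where
  "Sf x y = Sup ((\<lambda>c. \<bar>Ef c x - Ef c y\<bar>) ` Y)"

lemma absE: "x \<in> M \<Longrightarrow> y \<in> M \<Longrightarrow> \<bar>Ef c x - Ef c y\<bar> \<le> 2"
  using Ef_nn Ef_le2 by (smt (verit))

lemma Sf_ge: assumes "x \<in> M" "y \<in> M" "c \<in> Y" shows "\<bar>Ef c x - Ef c y\<bar> \<le> Sf x y"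
  unfolding Sf_def by (rule cSup_upper) (use assms absE in \<open>auto intro!: bdd_aboveI[of _ 2]\<close>)

lemma Sf_le: assumes "\<And>c. c \<in> Y \<Longrightarrow> \<bar>Ef c x - Ef c y\<bar> \<le> t" shows "Sf x y \<le> t"
  unfolding Sf_def using Yne assms by (auto intro!: cSup_least)

lemma Sf_nn: assumes "x \<in> M" "y \<in> M" shows "0 \<le> Sf x y"
proof -
  obtain c where "c \<in> Y" using Yne by auto
  then show ?thesis using Sf_ge[OF assms] by (meson abs_ge_zero order_trans)
qed

definition rho :: "'a \<Rightarrow> 'a \<Rightarrow> real" where
  "rho x y = (if x \<in> M \<and> y \<in> M then Sf x y + min (d x y) (dY x + dY y) else 0)"

lemma Sf_com: "Sf x y = Sf y x"
  unfolding Sf_def by (simp add: abs_minus_commute)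

lemma Sf_tri: assumes "x \<in> M" "y \<in> M" "z \<in> M" shows "Sf x z \<le> Sf x y + Sf y z"
proof (rule Sf_le)
  fix c assume c: "c \<in> Y"
  have "\<bar>Ef c x - Ef c z\<bar> \<le> \<bar>Ef c x - Ef c y\<bar> + \<bar>Ef c y - Ef c z\<bar>" by linarith
  also have "\<dots> \<le> Sf x y + Sf y z" using Sf_ge[OF assms(1,2) c] Sf_ge[OF assms(2,3) c] by linarith
  finally show "\<bar>Ef c x - Ef c z\<bar> \<le> Sf x y + Sf y z" .
qed

lemma m_tri: assumes "x \<in> M" "y \<in> M" "z \<in> M"
  shows "min (d x z) (dY x + dY z) \<le> min (d x y) (dY x + dY y) + min (d y z) (dY y + dY z)"
  using dtri[OF assms] dY_lip[OF assms(2,3)] dY_lip[OF assms(3,2)] dY_lip[OF assms(1,2)] dY_lip[OF assms(2,1)]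
    dcom[of y z] dcom[of x y] dY_nn[of x] dY_nn[of y] dY_nn[of z]
  unfolding min_def by (smt (verit))

lemma rho_metric: "Metric_space M rho"
proof
  fix x y show "0 \<le> rho x y" unfolding rho_def using Sf_nn by auto
  show "rho x y = rho y x" unfolding rho_def using Sf_com dcom by (auto simp: add.commute min.commute)
next
  fix x y assume x: "x \<in> M" and y: "y \<in> M"
  show "rho x y = 0 \<longleftrightarrow> x = y"
  proof
    assume "x = y"
    moreover have "Sf x x = 0" using Sf_le[of x x 0] Sf_nn[OF x x] by simp
    ultimately show "rho x y = 0" using x dzero[OF x x] by (simp add: rho_def)
  next
    assume r0: "rho x y = 0"
    have S0: "Sf x y = 0" and m0: "min (d x y) (dY x + dY y) = 0"
      using r0 x y Sf_nn[OF x y] dnn[of x y] dY_nn[of x] dY_nn[of y] unfolding rho_def min_def by (smt (verit))+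
    show "x = y"
    proof (cases "x \<in> Y \<and> y \<in> Y")
      case True
      have "\<bar>Ef x x - Ef x y\<bar> \<le> 0" using Sf_ge[OF x y, of x] True S0 by simp
      then have "e y x = 0" using True Ef_Y ezero[of x x] by simp
      then show ?thesis using ezero True by blast
    next
      case False
      then have "dY x + dY y > 0" using dY_pos x y dY_nn by (meson add_nonneg_pos add_pos_nonneg)
      then have "d x y = 0" using m0 by (simp add: min_def split: if_splits)
      then show ?thesis using dzero x y by blast
    qed
  qed
next
  fix x y z assume x: "x \<in> M" and y: "y \<in> M" and z: "z \<in> M"
  show "rho x z \<le> rho x y + rho y z"
    unfolding rho_def using x y z Sf_tri[OF x y z] m_tri[OF x y z] by simp
qed

lemma rho_le_e: assumes "x \<in> Y" "y \<in> Y" shows "rho x y \<le> e x y"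
proof -
  have xy: "x \<in> M" "y \<in> M" using assms YM by auto
  have "Sf x y \<le> e x y"
  proof (rule Sf_le)
    fix c assume c: "c \<in> Y"
    show "\<bar>Ef c x - Ef c y\<bar> \<le> e x y"
      using etri[OF assms(1,2) c] etri[OF assms(2,1) c] ecom[of x y] Ef_Y assms by simp
  qed
  moreover have "min (d x y) (dY x + dY y) = 0" using dY_Y[OF assms(1)] dY_Y[OF assms(2)] dnn[of x y] unfolding min_def by (smt (verit))
  ultimately show ?thesis using xy by (simp add: rho_def)
qed

lemma finer_rho_d: "finer M rho d"
  unfolding finer_def
proof (intro ballI allI impI)
  fix a r assume a: "a \<in> M" and r: "(r::real) > 0"
  show "\<exists>s>0. \<forall>x\<in>M. rho a x < s \<longrightarrow> d a x < r"
  proof (cases "a \<in> Y")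
    case False
    have D: "dY a > 0" using dY_pos a False by auto
    show ?thesis
    proof (intro exI[of _ "min r (dY a)"] conjI ballI impI)
      show "0 < min r (dY a)" using r D by simp
      fix x assume x: "x \<in> M" and h: "rho a x < min r (dY a)"
      have "min (d a x) (dY a + dY x) < min r (dY a)"
        using h Sf_nn[OF a x] a x unfolding rho_def by simp
      then show "d a x < r" using dY_nn[of x] unfolding min_def by (smt (verit))
    qed
  next
    case True
    have r2: "r/2 > 0" using r by simp
    obtain s1 where s1: "s1 > 0" "\<forall>b\<in>Y. e a b < s1 \<longrightarrow> d a b < r/2"
      using fed True r2 unfolding finer_def by blast
    define s where "s = min s1 (min (r/4) 1)"
    have s_pos: "0 < s" using s1 r by (simp add: s_def)
    show ?thesis
    proof (intro exI[of _ s] conjI ballI impI)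
      show "0 < s" by (rule s_pos)
      fix x assume x: "x \<in> M" and h: "rho a x < s"
      have m_lt: "min (d a x) (dY a + dY x) < s" and S_lt: "Sf a x < s"
        using h Sf_nn[OF a x] a x dnn[of a x] dY_nn[of a] dY_nn[of x] unfolding rho_def min_def
        by (smt (verit))+
      have "\<bar>Ef a a - Ef a x\<bar> \<le> Sf a x" using Sf_ge[OF a x True] .
      moreover have "Ef a a = 0" using Ef_Y[OF True] ezero True by simp
      ultimately have Eax: "Ef a x < s" using S_lt Ef_nn[OF x, of a] by simp
      have dYa: "dY a = 0" using dY_Y True by simp
      show "d a x < r"
      proof (cases "x \<in> Y")
        case True
        then have "e a x < s1" using Eax Ef_Y[OF True, of a] ecom[of x a] s_def by simp
        then show ?thesis using s1 True r by force
      next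
        case False
        have pos: "dY x > 0" using dY_pos x False by auto
        have "\<exists>b\<in>Y. e b a + d x b / dY x - 1 < s"
        proof (rule ccontr)
          assume "\<not> ?thesis"
          then have "\<forall>b\<in>Y. s \<le> e b a + d x b / dY x - 1" by (auto simp: not_less)
          then have "s \<le> Ef a x" using Ef_ge[OF x False] by blast
          then show False using Eax by simp
        qed
        then obtain b where b: "b \<in> Y" "e b a + d x b / dY x - 1 < s" by blast
        have ratio: "1 \<le> d x b / dY x" using ratio_ge1[OF x False b(1)] .
        have "e a b < s1" using b ratio ecom[of b a] s_def enn[of b a] by simp
        then have dab: "d a b < r/2" using s1 b by blast
        have "d x b / dY x < 1 + s" using b(2) enn[of b a] by linarith
        then have dxb: "d x b < (1 + s) * dY x" using pos by (simp add: divide_less_eq)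
        have s1': "s \<le> 1" "s \<le> r/4" by (auto simp: s_def)
        have "(1 + s) * dY x \<le> 2 * dY x" using s1' pos by (intro mult_right_mono) auto
        then have dxb2: "d x b < 2 * dY x" using dxb by simp
        have tri: "d a x \<le> d a b + d b x" using dtri a x b YM by auto
        show ?thesis
        proof (cases "d a x \<le> dY a + dY x")
          case True
          then show ?thesis using m_lt s1' r by (simp add: min_def)
        next
          case False
          then have "dY x < s" using m_lt dYa by (simp add: min_def)
          then show ?thesis using dxb2 tri dab dcom[of b x] s1' by linarith
        qed
      qed
    qed
  qed
qed

lemma rho_small: assumes a: "a \<in> M" and x: "x \<in> M" and E: "\<And>c. c \<in> Y \<Longrightarrow> \<bar>Ef c a - Ef c x\<bar> \<le> r/4"
  and dd: "d a x < r/2" shows "rho a x < r"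
proof -
  have "Sf a x \<le> r/4" using Sf_le E by blast
  moreover have "min (d a x) (dY a + dY x) \<le> d a x" by simp
  moreover have "r > 0" using dd dnn[of a x] by linarith
  ultimately show ?thesis using a x dd unfolding rho_def by simp
qed

lemma finer_d_rho: "finer M d rho"
  unfolding finer_def
proof (intro ballI allI impI)
  fix a r assume a: "a \<in> M" and r: "(r::real) > 0"
  show "\<exists>s>0. \<forall>x\<in>M. d a x < s \<longrightarrow> rho a x < r"
  proof (cases "a \<in> Y")
    case False
    define D where "D = dY a"
    have D: "D > 0" using dY_pos a False by (auto simp: D_def)
    define K where "K = 4 / (D * D)"
    have K: "K > 0" using D by (simp add: K_def)
    define s where "s = min (D/2) (min (r/2) (r/(4*K)))"
    have s: "s > 0" using D r K by (simp add: s_def)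
    show ?thesis
    proof (intro exI[of _ s] conjI ballI impI)
      show "s > 0" by (rule s)
      fix x assume x: "x \<in> M" and dax: "d a x < s"
      have "dY a \<le> dY x + d a x" using dY_lip[OF a x] .
      then have dYx: "dY x > D/2" using dax by (simp add: s_def D_def)
      then have xY: "x \<notin> Y" using dY_Y D by force
      have ratio: "\<bar>d x b / dY x - d a b / dY a\<bar> \<le> K * d a x" if b: "b \<in> Y" for b
      proof -
        have bM: "b \<in> M" using b YM by auto
        have t1: "\<bar>d x b - d a b\<bar> \<le> d a x"
          using dtri[OF a x bM] dtri[OF x a bM] dcom[of a x] by linarith
        have t2: "\<bar>dY a - dY x\<bar> \<le> d a x"
          using dY_lip[OF a x] dY_lip[OF x a] dcom[of a x] by linarith
        have p1: "\<bar>(d x b - d a b) * dY a\<bar> \<le> d a x"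
        proof -
          have "\<bar>(d x b - d a b) * dY a\<bar> = \<bar>d x b - d a b\<bar> * dY a" by (simp add: abs_mult)
          also have "\<dots> \<le> d a x * 1" using t1 dY_le1[of a] by (intro mult_mono) auto
          finally show ?thesis by simp
        qed
        have p2: "\<bar>d a b * (dY a - dY x)\<bar> \<le> d a x"
        proof -
          have "\<bar>d a b * (dY a - dY x)\<bar> = d a b * \<bar>dY a - dY x\<bar>" by (simp add: abs_mult)
          also have "\<dots> \<le> 1 * d a x" using t2 d1[of a b] by (intro mult_mono) auto
          finally show ?thesis by simp
        qed
        have num: "\<bar>d x b * dY a - d a b * dY x\<bar> \<le> 2 * d a x"
        proof -
          have "d x b * dY a - d a b * dY x = (d x b - d a b) * dY a + d a b * (dY a - dY x)"
            by (simp add: algebra_simps)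
          then show ?thesis using p1 p2 by linarith
        qed
        have posx: "dY x > 0" using dYx D by linarith
        have posa: "dY a > 0" using D D_def by simp
        have eq: "d x b / dY x - d a b / dY a = (d x b * dY a - d a b * dY x) / (dY x * dY a)"
          using posx posa by (simp add: field_simps)
        have den: "D * D / 2 \<le> dY x * dY a"
        proof -
          have "D * D / 2 = (D/2) * D" by simp
          also have "\<dots> \<le> dY x * dY a" using dYx D D_def by (intro mult_mono) auto
          finally show ?thesis .
        qed
        have "\<bar>d x b / dY x - d a b / dY a\<bar> = \<bar>d x b * dY a - d a b * dY x\<bar> / (dY x * dY a)"
          using eq posx posa by (simp add: abs_divide)
        also have "\<dots> \<le> (2 * d a x) / (D * D / 2)"
          using num den D by (intro frac_le) auto
        also have "\<dots> = K * d a x" using D by (simp add: K_def field_simps)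
        finally show ?thesis .
      qed
      have Kax: "K * d a x \<le> r/4"
      proof -
        have "K * d a x \<le> K * (r/(4*K))" using dax K by (intro mult_left_mono) (auto simp: s_def)
        also have "\<dots> = r/4" using K by simp
        finally show ?thesis .
      qed
      show "rho a x < r"
      proof (rule rho_small[OF a x])
        show "d a x < r/2" using dax by (simp add: s_def)
        fix c assume c: "c \<in> Y"
        have "Ef c a - K * d a x \<le> Ef c x"
        proof (rule Ef_ge[OF x xY])
          fix b assume b: "b \<in> Y"
          show "Ef c a - K * d a x \<le> e b c + d x b / dY x - 1"
            using Ef_le[OF a False b, of c] ratio[OF b] by linarith
        qed
        moreover have "Ef c x - K * d a x \<le> Ef c a"
        proof (rule Ef_ge[OF a False])
          fix b assume b: "b \<in> Y"
          show "Ef c x - K * d a x \<le> e b c + d a b / dY a - 1"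
            using Ef_le[OF x xY b, of c] ratio[OF b] by linarith
        qed
        ultimately show "\<bar>Ef c a - Ef c x\<bar> \<le> r/4" using Kax by linarith
      qed
    qed
  next
    case True
    define \<eta> where "\<eta> = r/8"
    have eta: "\<eta> > 0" using r by (simp add: \<eta>_def)
    obtain s2 where s2: "s2 > 0" "\<forall>b\<in>Y. d a b < s2 \<longrightarrow> e a b < \<eta>"
      using fde True eta unfolding finer_def by blast
    define s where "s = min (s2/(3+r)) (r/2)"
    have s: "s > 0" using s2 r by (simp add: s_def)
    have s3: "(3 + r) * s \<le> s2"
    proof -
      have "(3 + r) * s \<le> (3 + r) * (s2/(3+r))" using r by (intro mult_left_mono) (auto simp: s_def)
      also have "\<dots> = s2" using r by simp
      finally show ?thesis .
    qed
    have dYa: "dY a = 0" using dY_Y True by simp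
    show ?thesis
    proof (intro exI[of _ s] conjI ballI impI)
      show "s > 0" by (rule s)
      fix x assume x: "x \<in> M" and dax: "d a x < s"
      have "(3 + r) * s = 3 * s + r * s" by (simp add: algebra_simps)
      moreover have "0 \<le> r * s" using r s by simp
      ultimately have s33: "3 * s \<le> s2" using s3 by linarith
      then have s2': "s \<le> s2" using s by linarith
      show "rho a x < r"
      proof (rule rho_small[OF a x])
        show "d a x < r/2" using dax by (simp add: s_def)
        fix c assume c: "c \<in> Y"
        have Eca: "Ef c a = e a c" using Ef_Y[OF True] .
        show "\<bar>Ef c a - Ef c x\<bar> \<le> r/4"
        proof (cases "x \<in> Y")
          case xY: True
          have "e a x < \<eta>" using s2 xY dax s2' by force
          moreover have "\<bar>e a c - e x c\<bar> \<le> e a x"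
            using etri[OF True xY c] etri[OF xY True c] ecom[of a x] by linarith
          ultimately show ?thesis using Eca Ef_Y[OF xY, of c] enn[of a x] \<eta>_def by linarith
        next
          case xY: False
          have pos: "dY x > 0" using dY_pos x xY by auto
          have dYx: "dY x \<le> d a x" using dY_le[OF True, of x] dcom[of x a] by simp
          obtain b where b: "b \<in> Y" "d x b < dY x + \<eta> * dY x"
            using dY_approx[of "\<eta> * dY x" x] eta pos by auto
          have bM: "b \<in> M" using b YM by auto
          have "(1 + \<eta>) * dY x \<le> (1 + \<eta>) * s" using dYx dax eta by (intro mult_left_mono) auto
          moreover have "(2 + \<eta>) * s \<le> (3 + r) * s" using s r by (intro mult_right_mono) (auto simp: \<eta>_def)
          moreover have "d a b \<le> d a x + d x b" using dtri[OF a x bM] .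
          ultimately have "d a b < s2" using b(2) dax s3 by (simp add: algebra_simps)
          then have eab: "e a b < \<eta>" using s2 b by blast
          have "d x b / dY x < 1 + \<eta>" using b(2) pos by (simp add: divide_less_eq algebra_simps)
          moreover have "Ef c x \<le> e b c + d x b / dY x - 1" using Ef_le[OF x xY b(1)] .
          moreover have "e b c \<le> e a c + e a b" using etri[OF b(1) True c] ecom[of a b] by simp
          ultimately have up: "Ef c x \<le> e a c + 2 * \<eta>" using eab by linarith
          have low: "e a c - \<eta> \<le> Ef c x"
          proof (rule Ef_ge[OF x xY])
            fix b assume b: "b \<in> Y"
            have bM: "b \<in> M" using b YM by auto
            have ratio: "1 \<le> d x b / dY x" using ratio_ge1[OF x xY b] .
            show "e a c - \<eta> \<le> e b c + d x b / dY x - 1"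
            proof (cases "e a b < \<eta>")
              case True
              then show ?thesis using etri[OF \<open>a \<in> Y\<close> b c] ratio by linarith
            next
              case False
              then have "s2 \<le> d a b" using s2 b by (meson not_less)
              moreover have "d a b \<le> d a x + d x b" using dtri[OF a x bM] .
              moreover note s33
              ultimately have "2 * dY x \<le> d x b" using dax dYx by linarith
              then have "2 \<le> d x b / dY x" using pos by (simp add: le_divide_eq)
              then show ?thesis using e1[of a c] enn[of b c] eta by linarith
            qed
          qed
          show ?thesis using up low Eca eta \<eta>_def by linarith
        qed
      qed
    qed
  qed
qed

end


lemma cap_metric: assumes "Metric_space M d" shows "Metric_space M (\<lambda>x y. min (d x y) 1)"
proof
  fix x y show "0 \<le> min (d x y) 1" using Metric_space.nonneg[OF assms] by simp
  show "min (d x y) 1 = min (d y x) 1" using Metric_space.commute[OF assms] by simp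
next
  fix x y show "x \<in> M \<Longrightarrow> y \<in> M \<Longrightarrow> (min (d x y) 1 = 0) = (x = y)"
  proof -
    assume xy: "x \<in> M" "y \<in> M"
    have "min (d x y) 1 = 0 \<longleftrightarrow> d x y = 0" by (simp add: min_def)
    then show ?thesis using Metric_space.zero[OF assms xy] by simp
  qed
next
  fix x y z assume "x \<in> M" "y \<in> M" "z \<in> M"
  then show "min (d x z) 1 \<le> min (d x y) 1 + min (d y z) 1"
    using Metric_space.triangle[OF assms, of x y z] Metric_space.nonneg[OF assms]
    unfolding min_def by (smt (verit))
qed

lemma cap_finer: assumes "finer M a b" shows "finer M (\<lambda>x y. min (a x y) 1) (\<lambda>x y. min (b x y) 1)"
  unfolding finer_def
proof (intro ballI allI impI)
  fix p r assume p: "p \<in> M" and r: "(r::real) > 0"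
  obtain s where s: "s > 0" "\<forall>x\<in>M. a p x < s \<longrightarrow> b p x < r" using assms p r unfolding finer_def by blast
  show "\<exists>s>0. \<forall>x\<in>M. min (a p x) 1 < s \<longrightarrow> min (b p x) 1 < r"
    by (rule exI[of _ "min s 1"]) (use s in \<open>auto simp: min_def\<close>)
qed

lemma finer_cap1: "finer M d (\<lambda>x y. min (d x y) 1)"
  unfolding finer_def
proof (intro ballI allI impI)
  fix p r assume "p \<in> M" "(r::real) > 0"
  then show "\<exists>s>0. \<forall>x\<in>M. d p x < s \<longrightarrow> min (d p x) 1 < r"
    by (intro exI[of _ r]) auto
qed

lemma finer_cap2: "finer M (\<lambda>x y. min (d x y) 1) d"
  unfolding finer_def
proof (intro ballI allI impI)
  fix p r assume "p \<in> M" "(r::real) > 0"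
  then show "\<exists>s>0. \<forall>x\<in>M. min (d p x) 1 < s \<longrightarrow> d p x < r"
    by (intro exI[of _ "min r 1"]) (auto simp: min_def)
qed


theorem mainTheorem1:
  fixes X :: "'a topology" and G :: "('g, 'm) monoid_scheme" and \<phi> :: "'g \<Rightarrow> 'a \<Rightarrow> 'a"
    and Y :: "'a set"
  assumes "metrizable_space X"
    and "group G"
    and "group_action G (topspace X) \<phi>"
    and "MIE G \<phi> X"
    and "closedin X Y"
    and "\<forall>g\<in>carrier G. \<forall>y\<in>Y. \<phi> g y \<in> Y"
  shows "group_action G Y (\<lambda>g. restrict (\<phi> g) Y) \<and> MIE G (\<lambda>g. restrict (\<phi> g) Y) (subtopology X Y)"
proof
  have YM: "Y \<subseteq> topspace X" using assms(5) closedin_subset by blast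
  show "group_action G Y (\<lambda>g. restrict (\<phi> g) Y)" using restr_action[OF assms(3) YM assms(6)] .
  define M where "M = topspace X"
  obtain M0 d where md0: "Metric_space M0 d" and X: "X = Metric_space.mtopology M0 d"
    using assms(1) unfolding metrizable_space_def by blast
  have M0: "M0 = M" using X Metric_space.topspace_mtopology[OF md0] M_def by simp
  have md: "Metric_space M d" using md0 M0 by simp
  have XM: "X = Metric_space.mtopology M d" using X M0 by simp
  show "MIE G (\<lambda>g. restrict (\<phi> g) Y) (subtopology X Y)"
    unfolding MIE_def
  proof (intro allI impI)
    fix e assume ce: "compatible_metric (subtopology X Y) e"
    have tY: "topspace (subtopology X Y) = Y" using YM by auto
    have me: "Metric_space Y e" and te: "Metric_space.mtopology Y e = subtopology X Y"
      using ce tY unfolding compatible_metric_def by auto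
    show "expansive_wrt G (\<lambda>g. restrict (\<phi> g) Y) (topspace (subtopology X Y)) e"
    proof (cases "Y = {}")
      case True
      then show ?thesis unfolding tY expansive_wrt_def by (auto intro: exI[of _ 1])
    next
      case Yne: False
      interpret Submetric M d Y
        using md YM M_def by (simp add: Submetric_def Submetric_axioms_def)
      have tdY: "Metric_space.mtopology Y d = subtopology X Y"
        using mtopology_submetric XM by simp
      have mdY: "Metric_space Y d" using sub.Metric_space_axioms .
      have fY: "finer Y e d \<and> finer Y d e"
        using mtop_eq_iff[OF me mdY] te tdY by simp
      define d' where "d' = (\<lambda>x y. min (d x y) 1)"
      define e' where "e' = (\<lambda>x y. min (e x y) 1)"
      have md': "Metric_space M d'" unfolding d'_def by (rule cap_metric[OF md])
      have me': "Metric_space Y e'" unfolding e'_def by (rule cap_metric[OF me])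
      have X': "X = Metric_space.mtopology M d'"
        using mtop_eq_iff[OF md md'] XM finer_cap1[of M d] finer_cap2[of M d] unfolding d'_def by simp
      have YM': "Y \<subseteq> M" using YM by (simp add: M_def)
      have oX: "openin X (M - Y)" using assms(5) unfolding closedin_def M_def by blast
      have o: "openin (Metric_space.mtopology M d') (M - Y)" using oX X' by metis
      have o2: "\<forall>z. z \<in> M - Y \<longrightarrow> (\<exists>r>0. Metric_space.mball M d' z r \<subseteq> M - Y)"
        using o unfolding Metric_space.openin_mtopology[OF md'] by (elim conjE)
      have sep: "\<exists>s>0. \<forall>b\<in>Y. s \<le> d' x b" if x: "x \<in> M" "x \<notin> Y" for x
      proof -
        have "x \<in> M - Y" using x by simp
        then obtain r where r: "r > 0" "Metric_space.mball M d' x r \<subseteq> M - Y"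
          using o2 by blast
        have "r \<le> d' x b" if b: "b \<in> Y" for b
        proof (rule ccontr)
          assume "\<not> r \<le> d' x b"
          then have "d' x b < r" by simp
          moreover have "b \<in> M" using b YM' by blast
          ultimately have "b \<in> Metric_space.mball M d' x r" using x(1)
            unfolding Metric_space.in_mball[OF md'] by blast
          then show False using r b by blast
        qed
        then show ?thesis using r by blast
      qed
      have d1': "\<And>x y. d' x y \<le> 1" by (simp add: d'_def)
      have e1': "\<And>x y. e' x y \<le> 1" by (simp add: e'_def)
      have fde': "finer Y d' e'" unfolding d'_def e'_def using cap_finer fY by blast
      have fed': "finer Y e' d'" unfolding d'_def e'_def using cap_finer fY by blast
      interpret ex: extsetup M Y d' e'
        using md' me' YM' Yne d1' e1' sep fde' fed' by (rule extsetup.intro)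
      have crho: "compatible_metric X ex.rho"
        unfolding compatible_metric_def
      proof
        show "Metric_space (topspace X) ex.rho" using ex.rho_metric M_def by simp
        have "Metric_space.mtopology M ex.rho = Metric_space.mtopology M d'"
          using mtop_eq_iff[OF ex.rho_metric md'] ex.finer_rho_d ex.finer_d_rho by simp
        then show "Metric_space.mtopology (topspace X) ex.rho = X" unfolding M_def[symmetric] using X' by simp
      qed
      then have "expansive_wrt G \<phi> (topspace X) ex.rho" using assms(4) unfolding MIE_def by blast
      then obtain c where c: "c > 0"
        "\<forall>x\<in>M. \<forall>y\<in>M. x \<noteq> y \<longrightarrow> (\<exists>g\<in>carrier G. ex.rho (\<phi> g x) (\<phi> g y) > c)"
        unfolding expansive_wrt_def M_def by blast
      show ?thesis unfolding tY expansive_wrt_def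
      proof (intro exI[of _ c] conjI ballI impI)
        show "c > 0" by (rule c)
        fix x y assume x: "x \<in> Y" and y: "y \<in> Y" and xy: "x \<noteq> y"
        obtain g where g: "g \<in> carrier G" "ex.rho (\<phi> g x) (\<phi> g y) > c"
          using c(2) x y xy YM' by blast
        have gx: "\<phi> g x \<in> Y" and gy: "\<phi> g y \<in> Y" using assms(6) g x y by auto
        have "ex.rho (\<phi> g x) (\<phi> g y) \<le> e' (\<phi> g x) (\<phi> g y)" using ex.rho_le_e[OF gx gy] .
        also have "\<dots> \<le> e (\<phi> g x) (\<phi> g y)" by (simp add: e'_def)
        finally show "\<exists>g\<in>carrier G. c < e (restrict (\<phi> g) Y x) (restrict (\<phi> g) Y y)"
          using g x y by (intro bexI[of _ g]) auto
      qed
    qed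
  qed
qed

end
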